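(* Suppose the jobs are indexed so that $d_1\le d_2\le\dots\le d_n$. Let $\sigma$ be a proper schedule and $\sigma'$ the intermediate schedule obtained from $\sigma$ by an admissible swap at some step $j^*$ between machines $M_h$ and $M_i$. Then $L_{\max}(\sigma')\le L_{\max}(\sigma)$, where $L_{\max}(\tau)=\max_{j\in J}(C_j(\tau)-d_j)$.
   Context: Jobs $J=\{1,\dots,n\}$, job $j$ with positive integer processing time $p_j$ and integer due date $d_j$, are scheduled non-preemptively on $m$ identical machines $M_1,\dots,M_m$; $p_{\max}=\max_j p_j$, $P(X)=\sum_{j\in X}p_j$. A proper schedule $\sigma$ is a partition $J=J_1(\sigma)\cup\dots\cup J_m(\sigma)$, the jobs of $J_i(\sigma)$ processed on $M_i$ consecutively from time $0$ without idle time in increasing index order; $C_j(\sigma)$ is the completion time of $j$. $J_j=\{1,\dots,j\}$, $J_{i,j}(\sigma)=J_i(\sigma)\cap J_j$, $\Delta_{h,i,j}(\sigma)=P(J_{h,j}(\sigma))-P(J_{i,j}(\sigma))$. The swap: admissible for proper $\sigma$ at step $j^*$ with machines $M_h,M_i$ if $j^*\in J_h(\sigma)$, $|J_i(\sigma)\setminus J_{i,j^*}(\sigma)|\ge 2p_{\max}$, and $\Delta_{h,i,j^*}(\sigma)\ge 4p_{\max}^2$. Let $J_I$ be the first (smallest-index) $2p_{\max}$ jobs of $J_i(\sigma)\setminus J_{i,j^*}(\sigma)$ and $J_H$ the last (largest-index) $2p_{\max}$ jobs of $J_{h,j^*}(\sigma)$; choose non-empty $J_{H'}\subseteq J_H$,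 $J_{I'}\subseteq J_I$ with $P(J_{H'})=P(J_{I'})$. The intermediate schedule $\sigma'$: on $M_h$ the time interval occupied by $J_H$ in $\sigma$ is filled by $J_H\setminus J_{H'}$ then $J_{I'}$; on $M_i$ the interval occupied by $J_I$ is filled by $J_{H'}$ then $J_I\setminus J_{I'}$ (each group in its order in $\sigma$); all other jobs keep their positions. *)

theory Defs
  imports Main
begin

text \<open>Jobs are 1..n, machines 1..m. A proper schedule is given by an assignment
  a :: job => machine; on each machine jobs run from time 0, without idle time,
  in increasing index order.\<close>

definition proper :: "nat \<Rightarrow> nat \<Rightarrow> (nat \<Rightarrow> nat) \<Rightarrow> bool" where
  "proper n m a \<longleftrightarrow> (\<forall>j\<in>{1..n}. a j \<in> {1..m})"

definition Jm :: "nat \<Rightarrow> (nat \<Rightarrow> nat) \<Rightarrow> nat \<Rightarrow> nat set" where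
  "Jm n a i = {j\<in>{1..n}. a j = i}"

definition Jpre :: "nat \<Rightarrow> (nat \<Rightarrow> nat) \<Rightarrow> nat \<Rightarrow> nat \<Rightarrow> nat set" where
  "Jpre n a i j = {k\<in>Jm n a i. k \<le> j}"

definition Cp :: "nat \<Rightarrow> (nat \<Rightarrow> nat) \<Rightarrow> (nat \<Rightarrow> nat) \<Rightarrow> nat \<Rightarrow> nat" where
  "Cp n p a j = sum p (Jpre n a (a j) j)"

definition pmax :: "nat \<Rightarrow> (nat \<Rightarrow> nat) \<Rightarrow> nat" where
  "pmax n p = Max (p ` {1..n})"

definition first_k :: "nat set \<Rightarrow> nat \<Rightarrow> nat set" where
  "first_k S k = {x\<in>S. card {y\<in>S. y < x} < k}"

definition last_k :: "nat set \<Rightarrow> nat \<Rightarrow> nat set" where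
  "last_k S k = {x\<in>S. card {y\<in>S. x < y} < k}"

definition admissible ::
  "nat \<Rightarrow> nat \<Rightarrow> (nat \<Rightarrow> nat) \<Rightarrow> (nat \<Rightarrow> nat) \<Rightarrow> nat \<Rightarrow> nat \<Rightarrow> nat \<Rightarrow> bool" where
  "admissible n m p a js h i \<longleftrightarrow>
     h \<in> {1..m} \<and> i \<in> {1..m} \<and> js \<in> Jm n a h \<and>
     card (Jm n a i - Jpre n a i js) \<ge> 2 * pmax n p \<and>
     int (sum p (Jpre n a h js)) - int (sum p (Jpre n a i js)) \<ge> 4 * int (pmax n p) ^ 2"

definition JH :: "nat \<Rightarrow> (nat \<Rightarrow> nat) \<Rightarrow> (nat \<Rightarrow> nat) \<Rightarrow> nat \<Rightarrow> nat \<Rightarrow> nat set" where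
  "JH n p a js h = last_k (Jpre n a h js) (2 * pmax n p)"

definition JI :: "nat \<Rightarrow> (nat \<Rightarrow> nat) \<Rightarrow> (nat \<Rightarrow> nat) \<Rightarrow> nat \<Rightarrow> nat \<Rightarrow> nat set" where
  "JI n p a js i = first_k (Jm n a i - Jpre n a i js) (2 * pmax n p)"

text \<open>Completion times in the intermediate schedule sigma'. The interval occupied by a
  block B (consecutive jobs on machine k in sigma) starts at the total processing time of
  the jobs of machine k preceding B.\<close>
definition swapC ::
  "nat \<Rightarrow> (nat \<Rightarrow> nat) \<Rightarrow> (nat \<Rightarrow> nat) \<Rightarrow> nat \<Rightarrow> nat \<Rightarrow> nat \<Rightarrow> nat set \<Rightarrow> nat set \<Rightarrow> nat \<Rightarrow> nat" where
  "swapC n p a js h i H' I' x =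
     (let JHs = JH n p a js h; JIs = JI n p a js i;
          sH = sum p {k\<in>Jm n a h. k < Min JHs};
          sI = sum p {k\<in>Jm n a i. k < Min JIs}
      in if x \<in> JHs - H' then sH + sum p {y\<in>JHs - H'. y \<le> x}
         else if x \<in> I' then sH + sum p (JHs - H') + sum p {y\<in>I'. y \<le> x}
         else if x \<in> H' then sI + sum p {y\<in>H'. y \<le> x}
         else if x \<in> JIs - I' then sI + sum p H' + sum p {y\<in>JIs - I'. y \<le> x}
         else Cp n p a x)"

definition Lmax :: "nat \<Rightarrow> (nat \<Rightarrow> int) \<Rightarrow> (nat \<Rightarrow> nat) \<Rightarrow> int" where
  "Lmax n d C = Max ((\<lambda>j. int (C j) - d j) ` {1..n})"

end

theory Submission
  imports Defs
begin

lemma card_last_k: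
  assumes "finite S" shows "card (last_k S k) \<le> k"
proof -
  let ?f = "\<lambda>x. card {y\<in>S. x<y}"
  have inj: "inj_on ?f (last_k S k)"
  proof (rule inj_onI)
    fix x x' assume x: "x \<in> last_k S k" and x': "x' \<in> last_k S k" and eq: "?f x = ?f x'"
    show "x = x'"
    proof (rule ccontr)
      assume "x \<noteq> x'"
      hence "x < x' \<or> x' < x" by auto
      thus False
      proof
        assume lt: "x < x'"
        have "{y\<in>S. x'<y} \<subset> {y\<in>S. x<y}" using lt x' by (auto simp: last_k_def)
        hence "?f x' < ?f x" using assms by (intro psubset_card_mono) auto
        with eq show False by simp
      next
        assume lt: "x' < x"
        have "{y\<in>S. x<y} \<subset> {y\<in>S. x'<y}" using lt x by (auto simp: last_k_def)
        hence "?f x < ?f x'" using assms by (intro psubset_card_mono) auto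
        with eq show False by simp
      qed
    qed
  qed
  have "?f ` last_k S k \<subseteq> {..<k}" by (auto simp: last_k_def)
  from card_inj_on_le[OF inj this] show ?thesis by simp
qed

lemma card_first_k:
  assumes "finite S" shows "card (first_k S k) \<le> k"
proof -
  let ?f = "\<lambda>x. card {y\<in>S. y<x}"
  have inj: "inj_on ?f (first_k S k)"
  proof (rule inj_onI)
    fix x x' assume x: "x \<in> first_k S k" and x': "x' \<in> first_k S k" and eq: "?f x = ?f x'"
    show "x = x'"
    proof (rule ccontr)
      assume "x \<noteq> x'"
      hence "x < x' \<or> x' < x" by auto
      thus False
      proof
        assume lt: "x < x'"
        have "{y\<in>S. y<x} \<subset> {y\<in>S. y<x'}" using lt x by (auto simp: first_k_def)
        hence "?f x < ?f x'" using assms by (intro psubset_card_mono) auto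
        with eq show False by simp
      next
        assume lt: "x' < x"
        have "{y\<in>S. y<x'} \<subset> {y\<in>S. y<x}" using lt x' by (auto simp: first_k_def)
        hence "?f x' < ?f x" using assms by (intro psubset_card_mono) auto
        with eq show False by simp
      qed
    qed
  qed
  have "?f ` first_k S k \<subseteq> {..<k}" by (auto simp: first_k_def)
  from card_inj_on_le[OF inj this] show ?thesis by simp
qed

lemma sum_le_card_pm:
  assumes "\<forall>j\<in>X. p j \<le> (pm::nat)" "card X \<le> 2*pm"
  shows "sum p X \<le> 2*pm*pm"
proof -
  have "sum p X \<le> card X * pm" using sum_bounded_above[of X p pm] assms(1) by simp
  also have "\<dots> \<le> 2*pm*pm" using assms(2) by (intro mult_right_mono) auto
  finally show ?thesis .
qed

theorem lemma7:
  fixes n m :: nat and p :: "nat \<Rightarrow> nat" and d :: "nat \<Rightarrow> int"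
    and a :: "nat \<Rightarrow> nat" and js h i :: nat and H' I' :: "nat set"
  assumes ppos: "\<forall>j\<in>{1..n}. p j > 0"
    and dsorted: "\<forall>j k. 1 \<le> j \<longrightarrow> j \<le> k \<longrightarrow> k \<le> n \<longrightarrow> d j \<le> d k"
    and proper_a: "proper n m a"
    and adm: "admissible n m p a js h i"
    and H'sub: "H' \<subseteq> JH n p a js h" and I'sub: "I' \<subseteq> JI n p a js i"
    and H'ne: "H' \<noteq> {}" and I'ne: "I' \<noteq> {}"
    and eqP: "sum p H' = sum p I'"
  shows "Lmax n d (swapC n p a js h i H' I') \<le> Lmax n d (Cp n p a)"
proof -
  define pm where "pm = pmax n p"
  have js: "js \<in> Jm n a h" and cardI: "card (Jm n a i - Jpre n a i js) \<ge> 2*pm"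
    and delta: "int (sum p (Jpre n a h js)) - int (sum p (Jpre n a i js)) \<ge> 4 * int pm ^ 2"
    using adm unfolding admissible_def pm_def by auto
  have jsn: "js \<in> {1..n}" "a js = h" using js by (auto simp: Jm_def)
  have pbound: "\<forall>j\<in>{1..n}. p j \<le> pm" unfolding pm_def pmax_def by auto
  have pmpos: "pm > 0" using pbound ppos jsn by fastforce
  have finJm: "\<And>k. finite (Jm n a k)" by (auto simp: Jm_def)
  have Jmn: "\<And>k. Jm n a k \<subseteq> {1..n}" by (auto simp: Jm_def)
  define SH where "SH = Jpre n a h js"
  define SI where "SI = Jm n a i - Jpre n a i js"
  define JHs where "JHs = JH n p a js h"
  define JIs where "JIs = JI n p a js i"
  have JHs_eq: "JHs = last_k SH (2*pm)" by (simp add: JHs_def JH_def SH_def pm_def)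
  have JIs_eq: "JIs = first_k SI (2*pm)" by (simp add: JIs_def JI_def SI_def pm_def)
  have finSH: "finite SH" using finJm by (auto simp: SH_def Jpre_def)
  have finSI: "finite SI" using finJm by (auto simp: SI_def)
  have SHsub: "SH \<subseteq> Jm n a h" by (auto simp: SH_def Jpre_def)
  have SIsub: "SI \<subseteq> Jm n a i" by (auto simp: SI_def)
  have JHsub: "JHs \<subseteq> SH" by (auto simp: JHs_eq last_k_def)
  have JIsub: "JIs \<subseteq> SI" by (auto simp: JIs_eq first_k_def)
  have finJH: "finite JHs" using JHsub finSH finite_subset by blast
  have finJI: "finite JIs" using JIsub finSI finite_subset by blast
  have sumJH: "sum p JHs \<le> 2*pm*pm"
    apply (rule sum_le_card_pm)
    using JHsub SHsub Jmn pbound apply blast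
    using card_last_k[OF finSH] JHs_eq by simp
  have sumJI: "sum p JIs \<le> 2*pm*pm"
    apply (rule sum_le_card_pm)
    using JIsub SIsub Jmn pbound apply blast
    using card_first_k[OF finSI] JIs_eq by simp
  have SHle: "\<And>x. x \<in> SH \<Longrightarrow> x \<le> js" by (auto simp: SH_def Jpre_def)
  have SIgt: "\<And>x. x \<in> SI \<Longrightarrow> js < x" by (auto simp: SI_def Jpre_def)
  have jsSH: "js \<in> SH" using js by (auto simp: SH_def Jpre_def)
  have jsJH: "js \<in> JHs"
  proof -
    have e: "{y\<in>SH. js<y} = {}" using SHle by fastforce
    have c: "card {y\<in>SH. js<y} < 2*pm" using pmpos by (simp only: e card.empty)
    show ?thesis unfolding JHs_eq last_k_def mem_Collect_eq using jsSH c by blast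
  qed
  define mH where "mH = Min JHs"
  have mH: "mH \<in> JHs" "\<And>x. x \<in> JHs \<Longrightarrow> mH \<le> x" using finJH jsJH unfolding mH_def by (auto intro: Min_in)
  have mHjs: "mH \<le> js" using mH jsJH by auto
  define sH where "sH = sum p {k\<in>Jm n a h. k < mH}"
  have SHsplit: "SH = {k\<in>Jm n a h. k < mH} \<union> JHs"
  proof
    show "SH \<subseteq> {k\<in>Jm n a h. k < mH} \<union> JHs"
    proof
      fix k assume k: "k \<in> SH"
      show "k \<in> {k\<in>Jm n a h. k < mH} \<union> JHs"
      proof (cases "k < mH")
        case True thus ?thesis using k SHsub by auto
      next
        case False
        have "{y\<in>SH. k<y} \<subseteq> {y\<in>SH. mH<y}" using False by auto
        hence "card {y\<in>SH. k<y} \<le> card {y\<in>SH. mH<y}" using finSH by (intro card_mono) auto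
        also have "\<dots> < 2*pm" using mH(1) by (simp add: JHs_eq last_k_def)
        finally show ?thesis using k by (simp add: JHs_eq last_k_def)
      qed
    qed
  next
    show "{k\<in>Jm n a h. k < mH} \<union> JHs \<subseteq> SH" using JHsub mHjs by (auto simp: SH_def Jpre_def)
  qed
  have PH: "sum p SH = sH + sum p JHs"
    unfolding SHsplit sH_def
    by (rule sum.union_disjoint) (use finJm finJH mH(2) in force)+
  have SIne: "SI \<noteq> {}"
  proof
    assume "SI = {}"
    hence "card (Jm n a i - Jpre n a i js) = 0" unfolding SI_def by (simp only: card.empty)
    thus False using cardI pmpos by linarith
  qed
  define m0 where "m0 = Min SI"
  have m0: "m0 \<in> SI" "\<And>x. x \<in> SI \<Longrightarrow> m0 \<le> x" using finSI SIne unfolding m0_def by (auto intro: Min_in)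
  have m0JI: "m0 \<in> JIs"
  proof -
    have e: "{y\<in>SI. y<m0} = {}" using m0(2) by fastforce
    have c: "card {y\<in>SI. y<m0} < 2*pm" using pmpos by (simp only: e card.empty)
    show ?thesis unfolding JIs_eq first_k_def mem_Collect_eq using m0(1) c by blast
  qed
  define mI where "mI = Min JIs"
  have mI: "mI \<in> JIs" "\<And>x. x \<in> JIs \<Longrightarrow> mI \<le> x" using finJI m0JI unfolding mI_def by (auto intro: Min_in)
  have mIm0: "mI = m0" using mI m0 m0JI JIsub by force
  define sI where "sI = sum p {k\<in>Jm n a i. k < mI}"
  have sIle: "sI \<le> sum p (Jpre n a i js)"
  proof -
    have "{k\<in>Jm n a i. k < mI} \<subseteq> Jpre n a i js"
    proof
      fix k assume k: "k \<in> {k\<in>Jm n a i. k < mI}"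
      show "k \<in> Jpre n a i js"
      proof (rule ccontr)
        assume "k \<notin> Jpre n a i js"
        hence "k \<in> SI" using k by (auto simp: SI_def)
        thus False using m0(2) k mIm0 by fastforce
      qed
    qed
    thus ?thesis unfolding sI_def using finJm by (intro sum_mono2) (auto simp: Jpre_def)
  qed
  define PH where "PH = sum p SH"
  define PI where "PI = sum p (Jpre n a i js)"
  have deltan: "PI + 4*pm*pm \<le> PH"
  proof -
    have "int PI + 4 * int pm ^ 2 \<le> int PH" using delta by (simp add: PH_def PI_def SH_def)
    hence "int (PI + 4*pm*pm) \<le> int PH" by (simp add: power2_eq_square)
    thus ?thesis by linarith
  qed
  have Cjs: "Cp n p a js = PH" by (simp add: Cp_def jsn PH_def SH_def)
  have aJH: "\<And>x. x \<in> JHs \<Longrightarrow> a x = h" using JHsub SHsub by (auto simp: Jm_def)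
  have sHle: "\<And>x. x \<in> JHs \<Longrightarrow> sH \<le> Cp n p a x"
  proof -
    fix x assume x: "x \<in> JHs"
    have "{k\<in>Jm n a h. k < mH} \<subseteq> Jpre n a h x" using mH(2)[OF x] by (auto simp: Jpre_def)
    thus "sH \<le> Cp n p a x" unfolding sH_def Cp_def aJH[OF x] using finJm
      by (intro sum_mono2) (auto simp: Jpre_def)
  qed
  have H'JH: "H' \<subseteq> JHs" using H'sub JHs_def by simp
  have I'JI: "I' \<subseteq> JIs" using I'sub JIs_def by simp
  have sumH': "sum p H' \<le> sum p JHs" using H'JH finJH by (intro sum_mono2) auto
  have sumI': "sum p I' \<le> sum p JIs" using I'JI finJI by (intro sum_mono2) auto
  have diffH: "sum p (JHs - H') = sum p JHs - sum p H'"
    using H'JH finJH by (intro sum_diff_nat) (auto intro: finite_subset)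
  have diffI: "sum p (JIs - I') = sum p JIs - sum p I'"
    using I'JI finJI by (intro sum_diff_nat) (auto intro: finite_subset)
  have swap_eq: "\<And>x. swapC n p a js h i H' I' x =
     (if x \<in> JHs - H' then sH + sum p {y\<in>JHs - H'. y \<le> x}
         else if x \<in> I' then sH + sum p (JHs - H') + sum p {y\<in>I'. y \<le> x}
         else if x \<in> H' then sI + sum p {y\<in>H'. y \<le> x}
         else if x \<in> JIs - I' then sI + sum p H' + sum p {y\<in>JIs - I'. y \<le> x}
         else Cp n p a x)"
    by (simp add: swapC_def Let_def JHs_def JIs_def sH_def sI_def mH_def mI_def)
  have key: "\<And>x. swapC n p a js h i H' I' x \<le> Cp n p a x \<or>
       (swapC n p a js h i H' I' x \<le> Cp n p a js \<and> js < x)"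
  proof -
    fix x
    show "swapC n p a js h i H' I' x \<le> Cp n p a x \<or>
       (swapC n p a js h i H' I' x \<le> Cp n p a js \<and> js < x)"
    proof (cases "x \<in> JHs - H'")
      case True
      have x: "x \<in> JHs" using True by auto
      have "sH + sum p {y\<in>JHs - H'. y \<le> x} = sum p ({k\<in>Jm n a h. k < mH} \<union> {y\<in>JHs - H'. y \<le> x})"
        unfolding sH_def by (rule sum.union_disjoint[symmetric]) (use finJm finJH mH(2) in force)+
      also have "\<dots> \<le> Cp n p a x" unfolding Cp_def aJH[OF x]
        using finJm JHsub SHsub mH(2)[OF x] by (intro sum_mono2) (auto simp: Jpre_def)
      finally show ?thesis unfolding swap_eq[of x] if_P[OF True] by blast
    next
      case nH: False
      show ?thesis
      proof (cases "x \<in> I'")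
        case True
        have "sum p {y\<in>I'. y \<le> x} \<le> sum p I'" using I'JI finJI
          by (intro sum_mono2) (auto intro: finite_subset)
        hence "sH + sum p (JHs - H') + sum p {y\<in>I'. y \<le> x} \<le> PH"
          using diffH sumH' eqP PH PH_def by linarith
        moreover have "js < x" using True I'JI JIsub SIgt by blast
        ultimately show ?thesis unfolding swap_eq[of x] if_not_P[OF nH] if_P[OF True] Cjs by blast
      next
        case nI: False
        show ?thesis
        proof (cases "x \<in> H'")
          case True
          have "sum p {y\<in>H'. y \<le> x} \<le> sum p H'" using H'JH finJH
            by (intro sum_mono2) (auto intro: finite_subset)
          hence "sI + sum p {y\<in>H'. y \<le> x} \<le> sH"
            using sumH' sIle PI_def deltan PH PH_def sumJH by linarith
          also have "\<dots> \<le> Cp n p a x" using sHle True H'JH by blast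
          finally show ?thesis unfolding swap_eq[of x] if_not_P[OF nH] if_not_P[OF nI] if_P[OF True] by blast
        next
          case nH': False
          show ?thesis
          proof (cases "x \<in> JIs - I'")
            case True
            have "sum p {y\<in>JIs - I'. y \<le> x} \<le> sum p (JIs - I')" using finJI
              by (intro sum_mono2) auto
            hence "sI + sum p H' + sum p {y\<in>JIs - I'. y \<le> x} \<le> PH"
              using diffI sumI' eqP sIle PI_def deltan sumJI by linarith
            moreover have "js < x" using True JIsub SIgt by blast
            ultimately show ?thesis unfolding swap_eq[of x] if_not_P[OF nH] if_not_P[OF nI] if_not_P[OF nH'] if_P[OF True] Cjs by blast
          next
            case False
            thus ?thesis unfolding swap_eq[of x] if_not_P[OF nH] if_not_P[OF nI] if_not_P[OF nH'] if_not_P[OF False] by blast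
          qed
        qed
      qed
    qed
  qed
  have ne: "{1..n} \<noteq> {}" using jsn by auto
  have Lge: "\<And>j. j \<in> {1..n} \<Longrightarrow> int (Cp n p a j) - d j \<le> Lmax n d (Cp n p a)"
    unfolding Lmax_def by (rule Max_ge) auto
  show ?thesis
    unfolding Lmax_def[of n d "swapC n p a js h i H' I'"]
  proof (subst Max_le_iff, simp, use ne in simp, intro ballI)
    fix y assume "y \<in> (\<lambda>j. int (swapC n p a js h i H' I' j) - d j) ` {1..n}"
    then obtain j where j: "j \<in> {1..n}" and y: "y = int (swapC n p a js h i H' I' j) - d j" by auto
    from key[of j] show "y \<le> Lmax n d (Cp n p a)"
    proof
      assume "swapC n p a js h i H' I' j \<le> Cp n p a j"
      thus ?thesis using Lge[OF j] y by linarith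
    next
      assume A: "swapC n p a js h i H' I' j \<le> Cp n p a js \<and> js < j"
      have "d js \<le> d j" using dsorted jsn j A by auto
      thus ?thesis using Lge[OF jsn(1)] y A by linarith
    qed
  qed
qed

end
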